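(* There exists a non-empty Zariski open subset $\mathcal{U}$ of $\mathrm{GL}_2(\mathbb{C})^2$ such that for every Fibonacci sequence $(\mathbf{w}_i)_{i\ge0}$ in $\mathrm{GL}_2(\mathbb{C})$ with $(\mathbf{w}_0,\mathbf{w}_1)\in\mathcal{U}$ there exists $N\in\mathrm{GL}_2(\mathbb{C})$ such that the matrix $\mathbf{y}_i$, defined by $\mathbf{y}_i=\mathbf{w}_iN$ if $i$ is even and $\mathbf{y}_i=\mathbf{w}_i\,{}^tN$ if $i$ is odd, is symmetric for every $i\ge0$. Moreover, for any Fibonacci sequence $(\mathbf{w}_i)_{i\ge0}$ in $\mathrm{GL}_2(\mathbb{C})$, any $N\in\mathrm{GL}_2(\mathbb{C})$ such that $\mathbf{w}_0N$, $\mathbf{w}_1\,{}^tN$ and $\mathbf{w}_1\mathbf{w}_0N$ are symmetric has this property. Finally, when $(\mathbf{w}_0,\mathbf{w}_1)\in\mathcal{U}$ and $\mathbf{w}_0,\mathbf{w}_1$ have integer coefficients, such an $N$ may be chosen with integer coefficients.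
   Context: A Fibonacci sequence in a monoid is a sequence $(\mathbf{w}_i)_{i\ge0}$ with $\mathbf{w}_{i+2}=\mathbf{w}_{i+1}\mathbf{w}_i$ for all $i\ge0$. ${}^tN$ denotes the transpose of $N$. *)

theory Defs
  imports "HOL-Analysis.Analysis"
begin

type_synonym mat2 = "complex^2^2"

definition fibonacci_seq :: "(nat \<Rightarrow> mat2) \<Rightarrow> bool" where
  "fibonacci_seq w \<longleftrightarrow> (\<forall>i. w (i + 2) = w (i + 1) ** w i)"

definition in_GL2 :: "mat2 \<Rightarrow> bool" where
  "in_GL2 A \<longleftrightarrow> invertible A"

definition symmetric_mat :: "mat2 \<Rightarrow> bool" where
  "symmetric_mat A \<longleftrightarrow> transpose A = A"

definition integral_mat :: "mat2 \<Rightarrow> bool" where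
  "integral_mat A \<longleftrightarrow> (\<forall>i j. A $ i $ j \<in> \<int>)"

definition twisted_seq :: "(nat \<Rightarrow> mat2) \<Rightarrow> mat2 \<Rightarrow> nat \<Rightarrow> mat2" where
  "twisted_seq w N i = (if even i then w i ** N else w i ** transpose N)"

inductive_set pair_poly :: "(mat2 \<times> mat2 \<Rightarrow> complex) set" where
  const: "(\<lambda>_. c) \<in> pair_poly"
| coord1: "(\<lambda>p. fst p $ i $ j) \<in> pair_poly"
| coord2: "(\<lambda>p. snd p $ i $ j) \<in> pair_poly"
| add: "f \<in> pair_poly \<Longrightarrow> g \<in> pair_poly \<Longrightarrow> (\<lambda>p. f p + g p) \<in> pair_poly"
| mult: "f \<in> pair_poly \<Longrightarrow> g \<in> pair_poly \<Longrightarrow> (\<lambda>p. f p * g p) \<in> pair_poly"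

text \<open>Zariski open subsets of GL_2(C)^2: since GL_2(C)^2 is the principal open subset
  det(A) det(B) \<noteq> 0 of C^8, its Zariski open subsets are exactly the intersections of
  GL_2(C)^2 with complements of common zero sets of families of polynomials.\<close>
definition zariski_open_GL2sq :: "(mat2 \<times> mat2) set \<Rightarrow> bool" where
  "zariski_open_GL2sq U \<longleftrightarrow>
     (\<exists>F \<subseteq> pair_poly. U = {p. in_GL2 (fst p) \<and> in_GL2 (snd p) \<and> (\<exists>f\<in>F. f p \<noteq> 0)})"

end

theory Submission imports Defs begin

definition det3 :: "'a::comm_ring_1 \<Rightarrow> 'a \<Rightarrow> 'a \<Rightarrow> 'a \<Rightarrow> 'a \<Rightarrow> 'a \<Rightarrow> 'a \<Rightarrow> 'a \<Rightarrow> 'a \<Rightarrow> 'a" where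
  "det3 a b c d e f g h i = a*(e*i - f*h) - b*(d*i - f*g) + c*(d*h - e*g)"

definition crs :: "(nat \<Rightarrow> 'a::comm_ring_1) \<Rightarrow> (nat \<Rightarrow> 'a) \<Rightarrow> (nat \<Rightarrow> 'a) \<Rightarrow> nat \<Rightarrow> 'a" where
  "crs r s t j = (if j = 0 then det3 (r 1) (r 2) (r 3) (s 1) (s 2) (s 3) (t 1) (t 2) (t 3)
    else if j = 1 then - det3 (r 0) (r 2) (r 3) (s 0) (s 2) (s 3) (t 0) (t 2) (t 3)
    else if j = 2 then det3 (r 0) (r 1) (r 3) (s 0) (s 1) (s 3) (t 0) (t 1) (t 3)
    else - det3 (r 0) (r 1) (r 2) (s 0) (s 1) (s 2) (t 0) (t 1) (t 2))"

definition dot4 :: "(nat \<Rightarrow> 'a::comm_ring_1) \<Rightarrow> (nat \<Rightarrow> 'a) \<Rightarrow> 'a" where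
  "dot4 x n = x 0 * n 0 + x 1 * n 1 + x 2 * n 2 + x 3 * n 3"

lemma crs_orth: "dot4 r (crs r s t) = 0" "dot4 s (crs r s t) = 0" "dot4 t (crs r s t) = 0"
  by (simp_all add: dot4_def crs_def det3_def algebra_simps)

definition rowN :: "mat2 \<Rightarrow> nat \<Rightarrow> complex" where
  "rowN X j = (if j = 0 then - X$2$1 else if j = 1 then X$1$1 else if j = 2 then - X$2$2 else X$1$2)"
definition rowT :: "mat2 \<Rightarrow> nat \<Rightarrow> complex" where
  "rowT X j = (if j = 0 then - X$2$1 else if j = 1 then - X$2$2 else if j = 2 then X$1$1 else X$1$2)"
definition vecof :: "mat2 \<Rightarrow> nat \<Rightarrow> complex" where
  "vecof M j = (if j = 0 then M$1$1 else if j = 1 then M$1$2 else if j = 2 then M$2$1 else M$2$2)"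

lemma sym2: "symmetric_mat M \<longleftrightarrow> M$1$2 = M$2$1"
  unfolding symmetric_mat_def vec_eq_iff forall_2 transpose_def by auto

lemma symN: "symmetric_mat (X ** M) \<longleftrightarrow> dot4 (rowN X) (vecof M) = 0"
  unfolding sym2 dot4_def rowN_def vecof_def matrix_matrix_mult_def sum_2
  by (auto simp: algebra_simps)

lemma symT: "symmetric_mat (X ** transpose M) \<longleftrightarrow> dot4 (rowT X) (vecof M) = 0"
  unfolding sym2 dot4_def rowT_def vecof_def matrix_matrix_mult_def sum_2 transpose_def
  by (auto simp: algebra_simps)

definition Nmat :: "mat2 \<Rightarrow> mat2 \<Rightarrow> mat2" where
  "Nmat A B = (let n = crs (rowN A) (rowT B) (rowN (B ** A)) in
     (\<chi> i j. if i = 1 then (if j = 1 then n 0 else n 1) else (if j = 1 then n 2 else n 3)))"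

lemma vecof_Nmat: "dot4 x (vecof (Nmat A B)) = dot4 x (crs (rowN A) (rowT B) (rowN (B ** A)))"
  by (simp add: dot4_def vecof_def Nmat_def Let_def)

lemma Nmat_sym: "symmetric_mat (A ** Nmat A B)" "symmetric_mat (B ** transpose (Nmat A B))"
  "symmetric_mat (B ** A ** Nmat A B)"
    apply (simp only: symN vecof_Nmat crs_orth)
   apply (simp only: symT vecof_Nmat crs_orth)
  apply (simp only: symN vecof_Nmat crs_orth)
  done

lemma key:
  assumes "symmetric_mat (a ** M)" "symmetric_mat (b ** transpose M)"
  shows "symmetric_mat (b ** a ** b ** transpose M)"
proof -
  have 1: "transpose M ** transpose a = a ** M"
    using assms(1) by (simp add: symmetric_mat_def matrix_transpose_mul)
  have 2: "M ** transpose b = b ** transpose M"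
    using assms(2) by (simp add: symmetric_mat_def matrix_transpose_mul)
  have "transpose (b ** a ** b ** transpose M) = M ** transpose b ** transpose a ** transpose b"
    by (simp add: matrix_transpose_mul matrix_mul_assoc)
  also have "\<dots> = b ** (transpose M ** transpose a) ** transpose b"
    using 2 by (simp add: matrix_mul_assoc)
  also have "\<dots> = b ** a ** (M ** transpose b)"
    using 1 by (simp add: matrix_mul_assoc)
  also have "\<dots> = b ** a ** b ** transpose M"
    using 2 by (simp add: matrix_mul_assoc)
  finally show ?thesis by (simp add: symmetric_mat_def)
qed


lemma pp_neg: "f \<in> pair_poly \<Longrightarrow> (\<lambda>p. - f p) \<in> pair_poly"
  using pair_poly.mult[OF pair_poly.const[of "-1"], of f] by simp

lemma pp_sub: "f \<in> pair_poly \<Longrightarrow> g \<in> pair_poly \<Longrightarrow> (\<lambda>p. f p - g p) \<in> pair_poly"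
  using pair_poly.add[OF _ pp_neg, of f g] by simp

definition PM :: "(mat2 \<times> mat2 \<Rightarrow> mat2) \<Rightarrow> bool" where
  "PM X \<longleftrightarrow> (\<forall>i j. (\<lambda>p. X p $ i $ j) \<in> pair_poly)"

lemma PM_fst: "PM fst" and PM_snd: "PM snd"
  by (auto simp: PM_def intro: pair_poly.intros)

lemma PM_mult: "PM X \<Longrightarrow> PM Y \<Longrightarrow> PM (\<lambda>p. X p ** Y p)"
  unfolding PM_def matrix_matrix_mult_def sum_2
  by (auto intro!: pair_poly.add pair_poly.mult)

lemma pp_det3:
  assumes "a \<in> pair_poly" "b \<in> pair_poly" "c \<in> pair_poly" "d \<in> pair_poly" "e \<in> pair_poly"
    "f \<in> pair_poly" "g \<in> pair_poly" "h \<in> pair_poly" "i \<in> pair_poly"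
  shows "(\<lambda>p. det3 (a p) (b p) (c p) (d p) (e p) (f p) (g p) (h p) (i p)) \<in> pair_poly"
  unfolding det3_def using assms
  by (intro pp_sub pair_poly.add pair_poly.mult) auto

lemma pp_rowN: "PM X \<Longrightarrow> (\<lambda>p. rowN (X p) k) \<in> pair_poly"
  unfolding PM_def rowN_def
  by (cases "k = 0"; cases "k = 1"; cases "k = 2"; auto intro: pp_neg)

lemma pp_rowT: "PM X \<Longrightarrow> (\<lambda>p. rowT (X p) k) \<in> pair_poly"
  unfolding PM_def rowT_def
  by (cases "k = 0"; cases "k = 1"; cases "k = 2"; auto intro: pp_neg)

lemma pp_crs:
  assumes "\<And>k. (\<lambda>p. r p k) \<in> pair_poly" "\<And>k. (\<lambda>p. s p k) \<in> pair_poly" "\<And>k. (\<lambda>p. t p k) \<in> pair_poly"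
  shows "(\<lambda>p. crs (r p) (s p) (t p) j) \<in> pair_poly"
  unfolding crs_def using assms
  by (cases "j = 0"; cases "j = 1"; cases "j = 2"; auto intro!: pp_neg pp_det3)

lemma PM_Nmat: "PM (\<lambda>p. Nmat (fst p) (snd p))"
proof -
  have h: "\<And>k. (\<lambda>p. crs (rowN (fst p)) (rowT (snd p)) (rowN (snd p ** fst p)) k) \<in> pair_poly"
    by (intro pp_crs pp_rowN pp_rowT PM_fst PM_snd PM_mult)
  show ?thesis unfolding PM_def forall_2 Nmat_def Let_def
    using h by simp
qed

lemma pp_det: "PM X \<Longrightarrow> (\<lambda>p. det (X p)) \<in> pair_poly"
  unfolding PM_def det_2 by (intro pp_sub pair_poly.mult) auto

lemma int_mult: "integral_mat A \<Longrightarrow> integral_mat B \<Longrightarrow> integral_mat (A ** B)"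
  unfolding integral_mat_def matrix_matrix_mult_def sum_2 by auto

lemma int_det3: "a \<in> \<int> \<Longrightarrow> b \<in> \<int> \<Longrightarrow> c \<in> \<int> \<Longrightarrow> d \<in> \<int> \<Longrightarrow> e \<in> \<int> \<Longrightarrow> f \<in> \<int> \<Longrightarrow> g \<in> \<int> \<Longrightarrow> h \<in> \<int> \<Longrightarrow> i \<in> \<int> \<Longrightarrow>
  det3 a b c d e f g h i \<in> \<int>"
  unfolding det3_def by auto

lemma int_Nmat: "integral_mat A \<Longrightarrow> integral_mat B \<Longrightarrow> integral_mat (Nmat A B)"
proof -
  assume a: "integral_mat A" "integral_mat B"
  then have ab: "integral_mat (B ** A)" by (rule int_mult[rotated])
  have r: "\<And>X k. integral_mat X \<Longrightarrow> rowN X k \<in> \<int>" "\<And>X k. integral_mat X \<Longrightarrow> rowT X k \<in> \<int>"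
    unfolding integral_mat_def rowN_def rowT_def by auto
  have "\<And>k. crs (rowN A) (rowT B) (rowN (B ** A)) k \<in> \<int>"
    unfolding crs_def using r a ab by (auto intro!: int_det3)
  then show ?thesis unfolding integral_mat_def Nmat_def Let_def by auto
qed

definition A0 :: mat2 where "A0 = (\<chi> i j. if i = 2 \<and> j = 1 then 0 else 1)"
definition B0 :: mat2 where "B0 = (\<chi> i j. if i = 1 \<and> j = 2 then 0 else 1)"

lemma A0B0: "det A0 \<noteq> 0" "det B0 \<noteq> 0" "det (Nmat A0 B0) \<noteq> 0"
  by (simp_all add: A0_def B0_def det_2 Nmat_def Let_def crs_def det3_def rowN_def rowT_def
      matrix_matrix_mult_def sum_2)

lemma part2:
  assumes fib: "fibonacci_seq w"
    and s0: "symmetric_mat (w 0 ** N)" and s1: "symmetric_mat (w 1 ** transpose N)"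
    and s2: "symmetric_mat (w 1 ** w 0 ** N)"
  shows "symmetric_mat (twisted_seq w N i)"
proof -
  have wf: "\<And>i. w (i + 2) = w (i + 1) ** w i" using fib by (simp add: fibonacci_seq_def)
  have w3: "\<And>i. w (i + 3) = w (i + 1) ** w i ** w (i + 1)"
  proof -
    fix i
    have "w (i + 3) = w ((i + 1) + 2)" by (simp add: eval_nat_numeral)
    also have "\<dots> = w (i + 2) ** w (i + 1)" using wf[of "i+1"] by (simp add: add.assoc)
    also have "\<dots> = w (i + 1) ** w i ** w (i + 1)" using wf[of i] by simp
    finally show "w (i + 3) = w (i + 1) ** w i ** w (i + 1)" .
  qed
  have "symmetric_mat (twisted_seq w N i) \<and> symmetric_mat (twisted_seq w N (i + 1))
      \<and> symmetric_mat (twisted_seq w N (i + 2))"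
  proof (induction i)
    case 0
    then show ?case using s0 s1 s2 wf[of 0] by (simp add: twisted_seq_def)
  next
    case (Suc i)
    have t3: "symmetric_mat (twisted_seq w N (i + 3))"
    proof (cases "even i")
      case True
      then have "symmetric_mat (w i ** N)" "symmetric_mat (w (i + 1) ** transpose N)"
        using Suc.IH by (auto simp: twisted_seq_def)
      from key[OF this] True show ?thesis by (simp add: twisted_seq_def w3)
    next
      case False
      then have "symmetric_mat (w i ** transpose N)"
        "symmetric_mat (w (i + 1) ** transpose (transpose N))"
        using Suc.IH by (auto simp: twisted_seq_def)
      from key[OF this] False show ?thesis by (simp add: twisted_seq_def w3)
    qed
    then show ?case using Suc.IH by (simp add: numeral_eq_Suc)
  qed
  then show ?thesis by simp
qed

theorem proposition3p1:
  shows "\<exists>U. zariski_open_GL2sq U \<and> U \<noteq> {} \<and>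
    (\<forall>w. fibonacci_seq w \<and> (\<forall>i. in_GL2 (w i)) \<and> (w 0, w 1) \<in> U \<longrightarrow>
        (\<exists>N. in_GL2 N \<and> (\<forall>i. symmetric_mat (twisted_seq w N i)))) \<and>
    (\<forall>w N. fibonacci_seq w \<and> (\<forall>i. in_GL2 (w i)) \<and> in_GL2 N \<and>
        symmetric_mat (w 0 ** N) \<and> symmetric_mat (w 1 ** transpose N) \<and>
        symmetric_mat (w 1 ** w 0 ** N) \<longrightarrow>
        (\<forall>i. symmetric_mat (twisted_seq w N i))) \<and>
    (\<forall>w. fibonacci_seq w \<and> (\<forall>i. in_GL2 (w i)) \<and> (w 0, w 1) \<in> U \<and>
        integral_mat (w 0) \<and> integral_mat (w 1) \<longrightarrow>
        (\<exists>N. in_GL2 N \<and> integral_mat N \<and> (\<forall>i. symmetric_mat (twisted_seq w N i))))"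
proof -
  define g where "g = (\<lambda>p. det (Nmat (fst p) (snd p)))"
  define U where "U = {p. in_GL2 (fst p) \<and> in_GL2 (snd p) \<and> (\<exists>f\<in>{g}. f p \<noteq> 0)}"
  have gp: "g \<in> pair_poly" unfolding g_def by (rule pp_det[OF PM_Nmat])
  have zo: "zariski_open_GL2sq U" unfolding zariski_open_GL2sq_def U_def
    using gp by blast
  have ne: "U \<noteq> {}"
  proof -
    have "(A0, B0) \<in> U" unfolding U_def g_def in_GL2_def
      using A0B0 by (simp add: invertible_det_nz)
    then show ?thesis by blast
  qed
  have inU: "in_GL2 (Nmat A B)" if "(A, B) \<in> U" for A B
    using that unfolding U_def g_def in_GL2_def by (simp add: invertible_det_nz)
  show ?thesis
  proof (intro exI[of _ U] conjI allI impI)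
    show "zariski_open_GL2sq U" by (rule zo)
    show "U \<noteq> {}" by (rule ne)
  next
    fix w assume h: "fibonacci_seq w \<and> (\<forall>i. in_GL2 (w i)) \<and> (w 0, w 1) \<in> U"
    show "\<exists>N. in_GL2 N \<and> (\<forall>i. symmetric_mat (twisted_seq w N i))"
    proof (intro exI[of _ "Nmat (w 0) (w 1)"] conjI allI)
      show "in_GL2 (Nmat (w 0) (w 1))" using h inU by simp
      fix i show "symmetric_mat (twisted_seq w (Nmat (w 0) (w 1)) i)"
        using h by (intro part2 Nmat_sym) simp_all
    qed
  next
    fix w N i
    assume "fibonacci_seq w \<and> (\<forall>i. in_GL2 (w i)) \<and> in_GL2 N \<and>
        symmetric_mat (w 0 ** N) \<and> symmetric_mat (w 1 ** transpose N) \<and>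
        symmetric_mat (w 1 ** w 0 ** N)"
    then show "symmetric_mat (twisted_seq w N i)" by (intro part2) simp_all
  next
    fix w assume h: "fibonacci_seq w \<and> (\<forall>i. in_GL2 (w i)) \<and> (w 0, w 1) \<in> U \<and>
        integral_mat (w 0) \<and> integral_mat (w 1)"
    show "\<exists>N. in_GL2 N \<and> integral_mat N \<and> (\<forall>i. symmetric_mat (twisted_seq w N i))"
    proof (intro exI[of _ "Nmat (w 0) (w 1)"] conjI allI)
      show "in_GL2 (Nmat (w 0) (w 1))" using h inU by simp
      show "integral_mat (Nmat (w 0) (w 1))" using h by (intro int_Nmat) simp_all
      fix i show "symmetric_mat (twisted_seq w (Nmat (w 0) (w 1)) i)"
        using h by (intro part2 Nmat_sym) simp_all
    qed
  qed
qed

end
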